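(* Let $\mathcal{S}\subseteq\mathcal{P}_{fin}(\mathbb{N})$ be an IP set, $r\geq1$, and $c:\mathcal{S}\rightarrow[1,r]$ a coloring. Then at least one of the following holds: (1) there are an IP set $\mathcal{S}'\subseteq\mathcal{S}$ and some $i\in[1,r]$ such that $c(S)\neq i$ for every $S\in\mathcal{S}'$; or (2) there are a finite collection $\mathcal{B}\subseteq\mathcal{S}$ and an IP set $\mathcal{T}\subseteq\mathcal{S}-\mathcal{B}$ such that $\mathcal{B}$ full-matches $\mathcal{T}$.
   Context: $\mathcal{P}_{fin}(\mathbb{N})$ is the set of finite subsets of $\mathbb{N}$. A set $\mathcal{S}\subseteq\mathcal{P}_{fin}(\mathbb{N})$ is an IP set if it is closed under finite unions and contains an infinite family of pairwise disjoint elements. For $B\in\mathcal{S}$, $\mathcal{S}-B:=\{T\in\mathcal{S}: T\cap B=\emptyset\}$, and for $\mathcal{B}\subseteq\mathcal{S}$, $\mathcal{S}-\mathcal{B}:=\bigcap_{B\in\mathcal{B}}(\mathcal{S}-B)$. Relative to a coloring $c$: a family $\mathcal{D}$ full-matches a set $B$ if there is $D\in\mathcal{D}$ with $c(D)=c(B)=c(D\cup B)$; $\mathcal{D}$ full-matches a family $\mathcal{B}$ if it full-matches every $B\in\mathcal{B}$. *)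

theory Defs
  imports Main
begin

definition IP_set :: "nat set set \<Rightarrow> bool" where
  "IP_set S \<longleftrightarrow>
     (\<forall>A\<in>S. finite A) \<and>
     (\<forall>A\<in>S. \<forall>B\<in>S. A \<union> B \<in> S) \<and>
     (\<exists>F. F \<subseteq> S \<and> infinite F \<and> (\<forall>A\<in>F. \<forall>B\<in>F. A \<noteq> B \<longrightarrow> A \<inter> B = {}))"

definition set_minus_fam :: "nat set set \<Rightarrow> nat set set \<Rightarrow> nat set set" where
  "set_minus_fam S \<B> = {T \<in> S. \<forall>B\<in>\<B>. T \<inter> B = {}}"

definition full_matches_set :: "(nat set \<Rightarrow> nat) \<Rightarrow> nat set set \<Rightarrow> nat set \<Rightarrow> bool" where
  "full_matches_set c \<D> B \<longleftrightarrow> (\<exists>D\<in>\<D>. c D = c B \<and> c B = c (D \<union> B))"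

definition full_matches :: "(nat set \<Rightarrow> nat) \<Rightarrow> nat set set \<Rightarrow> nat set set \<Rightarrow> bool" where
  "full_matches c \<D> \<B> \<longleftrightarrow> (\<forall>B\<in>\<B>. full_matches_set c \<D> B)"

end

theory Submission
  imports Defs
begin


definition ultra :: "'a set set \<Rightarrow> bool" where
  "ultra U \<longleftrightarrow> (\<forall>A B. A \<in> U \<longrightarrow> A \<subseteq> B \<longrightarrow> B \<in> U) \<and> (\<forall>A\<in>U. \<forall>B\<in>U. A \<inter> B \<in> U)
     \<and> {} \<notin> U \<and> (\<forall>A. A \<in> U \<or> -A \<in> U)"

definition fip :: "'a set set \<Rightarrow> bool" where
  "fip X \<longleftrightarrow> (\<forall>F. finite F \<longrightarrow> F \<subseteq> X \<longrightarrow> \<Inter>F \<noteq> {})"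

lemma ultra_up: "ultra U \<Longrightarrow> A \<in> U \<Longrightarrow> A \<subseteq> B \<Longrightarrow> B \<in> U"
  unfolding ultra_def by blast
lemma ultra_int: "ultra U \<Longrightarrow> A \<in> U \<Longrightarrow> B \<in> U \<Longrightarrow> A \<inter> B \<in> U"
  unfolding ultra_def by blast
lemma ultra_empty: "ultra U \<Longrightarrow> {} \<notin> U"
  unfolding ultra_def by blast
lemma ultra_compl: "ultra U \<Longrightarrow> (-A \<in> U) = (A \<notin> U)"
proof -
  assume u: "ultra U"
  have "\<not> (A \<in> U \<and> -A \<in> U)"
  proof
    assume "A \<in> U \<and> -A \<in> U"
    then have "A \<inter> -A \<in> U" using u unfolding ultra_def by blast
    then show False using u unfolding ultra_def by simp
  qed
  moreover have "A \<in> U \<or> -A \<in> U" using u unfolding ultra_def by blast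
  ultimately show ?thesis by blast
qed
lemma ultra_UNIV: "ultra U \<Longrightarrow> UNIV \<in> U"
  using ultra_compl[of U "{}"] ultra_empty by fastforce
lemma ultra_int_iff: "ultra U \<Longrightarrow> (A \<inter> B \<in> U) = (A \<in> U \<and> B \<in> U)"
  by (meson inf_le1 inf_le2 ultra_int ultra_up)

lemma ultra_sub_eq:
  assumes "ultra U" "ultra V" "U \<subseteq> V" shows "U = V"
proof
  show "V \<subseteq> U"
  proof
    fix A assume "A \<in> V"
    show "A \<in> U"
    proof (rule ccontr)
      assume "A \<notin> U"
      then have "-A \<in> V" using assms ultra_compl by blast
      then show False using \<open>A \<in> V\<close> assms(2) ultra_compl by blast
    qed
  qed
qed (fact assms)

lemma ultra_finite_Union:
  assumes "ultra U" "finite I" "\<Union>(f ` I) \<in> U" shows "\<exists>i\<in>I. f i \<in> U"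
  using assms(2,3)
proof (induction I rule: finite_induct)
  case empty then show ?case using ultra_empty[OF assms(1)] by simp
next
  case (insert i I)
  show ?case
  proof (cases "f i \<in> U")
    case True then show ?thesis by blast
  next
    case False
    then have "- f i \<in> U" using ultra_compl assms(1) by blast
    then have "(f i \<union> \<Union>(f ` I)) \<inter> - f i \<in> U" using insert.prems ultra_int assms(1) by auto
    then have "\<Union>(f ` I) \<in> U" using ultra_up[OF assms(1)] by blast
    then show ?thesis using insert.IH by blast
  qed
qed

lemma ultra_exists_fip:
  assumes "fip X" shows "\<exists>U. ultra U \<and> X \<subseteq> U"
proof -
  let ?A = "{Y. X \<subseteq> Y \<and> fip Y}"
  have "\<exists>M\<in>?A. \<forall>Z\<in>?A. M \<subseteq> Z \<longrightarrow> Z = M"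
  proof (rule subset_Zorn_nonempty)
    show "?A \<noteq> {}" using assms by auto
  next
    fix C assume C: "C \<noteq> {}" "subset.chain ?A C"
    show "\<Union>C \<in> ?A"
    proof
      have "X \<subseteq> \<Union>C" using C unfolding subset.chain_def by blast
      moreover have "fip (\<Union>C)"
        unfolding fip_def
      proof (intro allI impI)
        fix F assume F: "finite F" "F \<subseteq> \<Union>C"
        obtain Y where "Y \<in> C" "F \<subseteq> Y" using finite_subset_Union_chain[OF F C] by blast
        then show "\<Inter>F \<noteq> {}" using C F unfolding subset.chain_def fip_def by blast
      qed
      ultimately show "X \<subseteq> \<Union>C \<and> fip (\<Union>C)" by blast
    qed
  qed
  then obtain M where M0: "M \<in> ?A" and max0: "\<forall>Z\<in>?A. M \<subseteq> Z \<longrightarrow> Z = M"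
    by (rule bexE)
  have M: "X \<subseteq> M" "fip M" using M0 by auto
  have max: "Z = M" if "X \<subseteq> Z" "fip Z" "M \<subseteq> Z" for Z
    using max0 that by auto
  have ext: "A \<in> M" if "fip (insert A M)" for A
    using max[of "insert A M"] M that by blast
  have dich: "A \<in> M \<or> -A \<in> M" for A
  proof (rule ccontr)
    assume "\<not> (A \<in> M \<or> -A \<in> M)"
    then have "\<not> fip (insert A M)" "\<not> fip (insert (-A) M)" using ext by auto
    then obtain F1 F2 where F1: "finite F1" "F1 \<subseteq> insert A M" "\<Inter>F1 = {}"
      and F2: "finite F2" "F2 \<subseteq> insert (-A) M" "\<Inter>F2 = {}"
      unfolding fip_def by blast
    let ?F = "(F1 - {A}) \<union> (F2 - {-A})"
    have "finite ?F" using F1 F2 by auto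
    moreover have "?F \<subseteq> M" using F1 F2 by auto
    ultimately have "\<Inter>?F \<noteq> {}" using M(2)[unfolded fip_def, rule_format] by simp
    then obtain z where z: "z \<in> \<Inter>?F" by blast
    show False
    proof (cases "z \<in> A")
      case True
      have "z \<in> X" if "X \<in> F1" for X
        using that True z by (cases "X = A") auto
      then have "z \<in> \<Inter>F1" by blast
      then show False using F1 by blast
    next
      case False
      have "z \<in> X" if "X \<in> F2" for X
        using that False z by (cases "X = -A") auto
      then have "z \<in> \<Inter>F2" by blast
      then show False using F2 by blast
    qed
  qed
  have "ultra M"
    unfolding ultra_def
  proof (intro conjI allI impI ballI)
    show "{} \<notin> M"
    proof
      assume "{} \<in> M" then show False using M(2)[unfolded fip_def, rule_format, of "{{}}"] by simp
    qed
  next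
    fix A B assume AB: "A \<in> M" "A \<subseteq> B"
    show "B \<in> M"
    proof (rule ccontr)
      assume "B \<notin> M" then have "-B \<in> M" using dich by blast
      then show False using M(2)[unfolded fip_def, rule_format, of "{A,-B}"] AB by auto
    qed
  next
    fix A B assume AB: "A \<in> M" "B \<in> M"
    show "A \<inter> B \<in> M"
    proof (rule ccontr)
      assume "A \<inter> B \<notin> M" then have "-(A \<inter> B) \<in> M" using dich by blast
      then show False using M(2)[unfolded fip_def, rule_format, of "{A,B,-(A\<inter>B)}"] AB by auto
    qed
  next
    fix A show "A \<in> M \<or> -A \<in> M" by (rule dich)
  qed
  then show ?thesis using M by blast
qed

lemma fip_base:
  assumes "{} \<notin> X" "\<And>A B. A \<in> X \<Longrightarrow> B \<in> X \<Longrightarrow> A \<inter> B \<in> X" shows "fip X"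
  unfolding fip_def
proof (intro allI impI)
  fix F assume F: "finite F" "F \<subseteq> X"
  show "\<Inter>F \<noteq> {}"
  proof (cases "F = {}")
    case True then show ?thesis by simp
  next
    case False
    have "\<Inter>F \<in> X" using F(1) False F(2)
      by (induction F rule: finite_ne_induct) (auto intro: assms(2))
    then show ?thesis using assms(1) by metis
  qed
qed

lemma ultra_exists_base:
  assumes "{} \<notin> X" "\<And>A B. A \<in> X \<Longrightarrow> B \<in> X \<Longrightarrow> A \<inter> B \<in> X" shows "\<exists>U. ultra U \<and> X \<subseteq> U"
  using ultra_exists_fip fip_base assms by blast



definition sh :: "'a set set \<Rightarrow> 'a set \<Rightarrow> 'a set set" where
  "sh A x = {y. x \<union> y \<in> A}"

definition mul :: "'a set set set \<Rightarrow> 'a set set set \<Rightarrow> 'a set set set" where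
  "mul p q = {A. {x. sh A x \<in> q} \<in> p}"

definition common :: "'a set set set set \<Rightarrow> 'a set set set" where
  "common M = {X. \<forall>q\<in>M. X \<in> q}"

definition closedU :: "'a set set set set \<Rightarrow> bool" where
  "closedU M \<longleftrightarrow> (\<forall>u. ultra u \<longrightarrow> common M \<subseteq> u \<longrightarrow> u \<in> M)"

definition semi :: "'a set set set set \<Rightarrow> bool" where
  "semi M \<longleftrightarrow> (\<forall>p\<in>M. \<forall>q\<in>M. mul p q \<in> M)"

lemma sh_sh: "sh (sh A u) v = sh A (u \<union> v)"
  unfolding sh_def by (simp add: Un_assoc)

lemma sh_int: "sh (A \<inter> B) x = sh A x \<inter> sh B x"
  unfolding sh_def by auto

lemma sh_compl: "sh (-A) x = - sh A x"
  unfolding sh_def by auto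

lemma mul_mem: "A \<in> mul p q \<longleftrightarrow> {x. sh A x \<in> q} \<in> p"
  unfolding mul_def by simp

lemma mul_assoc: "mul (mul p q) r = mul p (mul q r)"
  unfolding mul_def by (simp add: sh_sh sh_def[of "{x. _ x \<in> r}"])

lemma mul_ultra:
  assumes p: "ultra p" and q: "ultra q" shows "ultra (mul p q)"
proof -
  have 1: "B \<in> mul p q" if "A \<in> mul p q" "A \<subseteq> B" for A B
  proof -
    have "{x. sh A x \<in> q} \<subseteq> {x. sh B x \<in> q}"
    proof
      fix x assume "x \<in> {x. sh A x \<in> q}"
      moreover have "sh A x \<subseteq> sh B x" using \<open>A \<subseteq> B\<close> unfolding sh_def by auto
      ultimately show "x \<in> {x. sh B x \<in> q}" using ultra_up[OF q] by blast
    qed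
    then show ?thesis using that(1) ultra_up[OF p] unfolding mul_mem by blast
  qed
  have 2: "A \<inter> B \<in> mul p q" if "A \<in> mul p q" "B \<in> mul p q" for A B
  proof -
    have "{x. sh A x \<in> q} \<inter> {x. sh B x \<in> q} \<in> p" using that ultra_int[OF p] unfolding mul_mem by blast
    moreover have "{x. sh A x \<in> q} \<inter> {x. sh B x \<in> q} = {x. sh (A \<inter> B) x \<in> q}"
      using ultra_int_iff[OF q] by (auto simp: sh_int)
    ultimately show ?thesis unfolding mul_mem by simp
  qed
  have 3: "{} \<notin> mul p q"
  proof -
    have "{x. sh {} x \<in> q} = {}" using ultra_empty[OF q] by (simp add: sh_def)
    then show ?thesis using ultra_empty[OF p] unfolding mul_mem by simp
  qed
  have 4: "A \<in> mul p q \<or> -A \<in> mul p q" for A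
  proof -
    have "{x. sh (-A) x \<in> q} = - {x. sh A x \<in> q}"
      using ultra_compl[OF q] by (auto simp: sh_compl)
    then show ?thesis using ultra_compl[OF p] unfolding mul_mem by auto
  qed
  show ?thesis unfolding ultra_def using 1 2 3 4 by blast
qed

lemma common_int: "(\<And>q. q \<in> M \<Longrightarrow> ultra q) \<Longrightarrow> A \<in> common M \<Longrightarrow> B \<in> common M \<Longrightarrow> A \<inter> B \<in> common M"
proof -
  assume u: "\<And>q. q \<in> M \<Longrightarrow> ultra q" and A: "A \<in> common M" and B: "B \<in> common M"
  have "A \<inter> B \<in> q" if "q \<in> M" for q
    using ultra_int[OF u[OF that]] A B that unfolding common_def by simp
  then show ?thesis unfolding common_def by simp
qed

lemma common_UNIV: "(\<And>q. q \<in> M \<Longrightarrow> ultra q) \<Longrightarrow> UNIV \<in> common M"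
  unfolding common_def using ultra_UNIV by blast

lemma common_anti: "M \<subseteq> N \<Longrightarrow> common N \<subseteq> common M"
  unfolding common_def by auto

lemma chain_inter:
  assumes D: "D \<noteq> {}" "\<And>M. M \<in> D \<Longrightarrow> M \<noteq> {} \<and> closedU M \<and> (\<forall>q\<in>M. ultra q)"
    and ch: "\<And>M1 M2. M1 \<in> D \<Longrightarrow> M2 \<in> D \<Longrightarrow> M1 \<subseteq> M2 \<or> M2 \<subseteq> M1"
  shows "\<Inter>D \<noteq> {}"
proof -
  let ?X = "\<Union>M\<in>D. common M"
  have "{} \<notin> ?X"
  proof
    assume "{} \<in> ?X"
    then obtain M where "M \<in> D" "{} \<in> common M" by blast
    moreover then obtain q where "q \<in> M" using D(2) by blast
    ultimately show False using D(2) ultra_empty unfolding common_def by blast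
  qed
  moreover have "A \<inter> B \<in> ?X" if "A \<in> ?X" "B \<in> ?X" for A B
  proof -
    from that obtain M1 M2 where M: "M1 \<in> D" "M2 \<in> D" "A \<in> common M1" "B \<in> common M2" by blast
    show ?thesis
    proof (cases "M1 \<subseteq> M2")
      case True
      have "A \<inter> B \<in> q" if "q \<in> M1" for q
      proof -
        have "ultra q" using D(2)[OF M(1)] that by blast
        moreover have "A \<in> q" using M(3) that unfolding common_def by blast
        moreover have "B \<in> q" using M(4) True that unfolding common_def by blast
        ultimately show ?thesis by (rule ultra_int)
      qed
      then have "A \<inter> B \<in> common M1" unfolding common_def by blast
      then show ?thesis using M by blast
    next
      case False
      then have "M2 \<subseteq> M1" using ch M by blast
      have "A \<inter> B \<in> q" if "q \<in> M2" for q
      proof -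
        have "ultra q" using D(2)[OF M(2)] that by blast
        moreover have "A \<in> q" using M(3) \<open>M2 \<subseteq> M1\<close> that unfolding common_def by blast
        moreover have "B \<in> q" using M(4) that unfolding common_def by blast
        ultimately show ?thesis by (rule ultra_int)
      qed
      then have "A \<inter> B \<in> common M2" unfolding common_def by blast
      then show ?thesis using M by blast
    qed
  qed
  ultimately have "\<exists>u. ultra u \<and> ?X \<subseteq> u" by (rule ultra_exists_base)
  then obtain u where u: "ultra u" "?X \<subseteq> u" by blast
  have "u \<in> M" if "M \<in> D" for M
    using D(2)[OF that] u that unfolding closedU_def by blast
  then show ?thesis by blast
qed

lemma ellis:
  fixes H :: "'a set set set set"
  assumes H: "H \<noteq> {}" "\<forall>p\<in>H. ultra p" "closedU H" "semi H"
  shows "\<exists>p\<in>H. mul p p = p"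
proof -
  let ?A = "{M. M \<subseteq> H \<and> M \<noteq> {} \<and> closedU M \<and> semi M}"
  have "\<exists>N\<in>uminus ` ?A. \<forall>Z\<in>uminus ` ?A. N \<subseteq> Z \<longrightarrow> Z = N"
  proof (rule subset_Zorn_nonempty)
    show "uminus ` ?A \<noteq> {}" using H by blast
  next
    fix C assume C: "C \<noteq> {}" "subset.chain (uminus ` ?A) C"
    let ?D = "uminus ` C"
    have DA: "?D \<subseteq> ?A" using C(2) unfolding subset.chain_def by auto
    have Dne: "?D \<noteq> {}" using C by blast
    have ch: "M1 \<subseteq> M2 \<or> M2 \<subseteq> M1" if "M1 \<in> ?D" "M2 \<in> ?D" for M1 M2
    proof -
      from that obtain N1 N2 where "N1 \<in> C" "N2 \<in> C" "M1 = -N1" "M2 = -N2" by blast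
      then show ?thesis using C(2) unfolding subset.chain_def by auto
    qed
    have ne: "\<Inter>?D \<noteq> {}"
    proof (rule chain_inter[OF Dne _ ch])
      fix M assume "M \<in> ?D"
      then have "M \<in> ?A" using DA by blast
      then show "M \<noteq> {} \<and> closedU M \<and> (\<forall>q\<in>M. ultra q)" using H(2) by blast
    qed
    have "\<Inter>?D \<in> ?A"
    proof (intro CollectI conjI)
      show "\<Inter>?D \<subseteq> H" using DA Dne by blast
      show "\<Inter>?D \<noteq> {}" by (fact ne)
      show "closedU (\<Inter>?D)"
        unfolding closedU_def
      proof (intro allI impI)
        fix u assume u: "ultra u" "common (\<Inter>?D) \<subseteq> u"
        have "u \<in> M" if "M \<in> ?D" for M
        proof -
          have "common M \<subseteq> u" using common_anti[of "\<Inter>?D" M] that u by blast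
          then show ?thesis using DA that u unfolding closedU_def by blast
        qed
        then show "u \<in> \<Inter>?D" by blast
      qed
      show "semi (\<Inter>?D)"
        unfolding semi_def
      proof (intro ballI)
        fix a b assume ab: "a \<in> \<Inter>?D" "b \<in> \<Inter>?D"
        show "mul a b \<in> \<Inter>?D"
        proof (rule InterI)
          fix M assume M: "M \<in> ?D"
          then have "semi M" using DA by blast
          moreover have "a \<in> M" "b \<in> M" using ab M by (blast, blast)
          ultimately show "mul a b \<in> M" unfolding semi_def by blast
        qed
      qed
    qed
    moreover have "\<Union>C = - \<Inter>?D" by blast
    ultimately show "\<Union>C \<in> uminus ` ?A" by blast
  qed
  then obtain K where K: "K \<in> ?A" and Kmin: "\<And>M. M \<in> ?A \<Longrightarrow> M \<subseteq> K \<Longrightarrow> M = K"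
  proof -
    assume r: "\<And>K. K \<in> ?A \<Longrightarrow> (\<And>M. M \<in> ?A \<Longrightarrow> M \<subseteq> K \<Longrightarrow> M = K) \<Longrightarrow> thesis"
    from \<open>\<exists>N\<in>uminus ` ?A. _\<close> obtain N where N: "N \<in> uminus ` ?A" "\<forall>Z\<in>uminus ` ?A. N \<subseteq> Z \<longrightarrow> Z = N"
      by (rule bexE)
    then obtain K where "K \<in> ?A" "N = -K" by blast
    moreover have "M = K" if "M \<in> ?A" "M \<subseteq> K" for M
    proof -
      have "-M \<in> uminus ` ?A" using that by blast
      moreover have "N \<subseteq> -M" using that \<open>N = -K\<close> by blast
      ultimately have "-M = N" using N by blast
      then show ?thesis using \<open>N = -K\<close> by simp
    qed
    ultimately show thesis using r by blast
  qed
  have Kult: "\<And>q. q \<in> K \<Longrightarrow> ultra q" using K H(2) by blast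
  have Ksemi: "\<And>q1 q2. q1 \<in> K \<Longrightarrow> q2 \<in> K \<Longrightarrow> mul q1 q2 \<in> K" using K unfolding semi_def by blast
  have Kcl: "\<And>u. ultra u \<Longrightarrow> common K \<subseteq> u \<Longrightarrow> u \<in> K" using K unfolding closedU_def by blast
  obtain p where p: "p \<in> K" using K by blast
  have pu: "ultra p" using Kult p by blast
  define t where "t A = {x. sh A x \<in> p}" for A
  have t_int: "t (A \<inter> B) = t A \<inter> t B" for A B
    unfolding t_def using ultra_int_iff[OF pu] by (auto simp: sh_int)
  have t_UNIV: "t UNIV = UNIV" unfolding t_def sh_def using ultra_UNIV[OF pu] by simp
  have mul_t: "A \<in> mul q p \<longleftrightarrow> t A \<in> q" for A q unfolding t_def mul_mem by simp
  let ?Kp = "(\<lambda>q. mul q p) ` K"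
  have "?Kp \<in> ?A"
  proof (intro CollectI conjI)
    show "?Kp \<subseteq> H" using K Ksemi p by blast
    show "?Kp \<noteq> {}" using p by blast
    show "semi ?Kp"
      unfolding semi_def
    proof (intro ballI)
      fix a b assume "a \<in> ?Kp" "b \<in> ?Kp"
      then obtain q1 q2 where q: "q1 \<in> K" "q2 \<in> K" "a = mul q1 p" "b = mul q2 p" by blast
      have "mul a b = mul (mul (mul q1 p) q2) p" using q by (simp add: mul_assoc)
      moreover have "mul (mul q1 p) q2 \<in> K" using q p Ksemi by blast
      ultimately show "mul a b \<in> ?Kp" by blast
    qed
    show "closedU ?Kp"
      unfolding closedU_def
    proof (intro allI impI)
      fix u assume u: "ultra u" "common ?Kp \<subseteq> u"
      let ?X = "{Y \<inter> t A | Y A. Y \<in> common K \<and> A \<in> u}"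
      have "{} \<notin> ?X"
      proof
        assume "{} \<in> ?X"
        then obtain Y A where YA: "Y \<in> common K" "A \<in> u" "Y \<inter> t A = {}" by blast
        have "-A \<in> mul q p" if "q \<in> K" for q
        proof -
          have "Y \<in> q" using YA that unfolding common_def by blast
          then have "t A \<notin> q" using YA Kult[OF that] ultra_int ultra_empty by metis
          then have "A \<notin> mul q p" using mul_t by blast
          then show ?thesis using ultra_compl[OF mul_ultra[OF Kult[OF that] pu]] by blast
        qed
        then have "-A \<in> common ?Kp" unfolding common_def by blast
        then have "-A \<in> u" using u by blast
        then show False using YA ultra_compl[OF u(1)] by blast
      qed
      moreover have "a \<inter> b \<in> ?X" if "a \<in> ?X" "b \<in> ?X" for a b
      proof -
        from that obtain Y1 A1 Y2 A2 where YA: "Y1 \<in> common K" "A1 \<in> u" "a = Y1 \<inter> t A1"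
          "Y2 \<in> common K" "A2 \<in> u" "b = Y2 \<inter> t A2" by blast
        have c1: "Y1 \<inter> Y2 \<in> common K" using common_int[of K Y1 Y2] Kult YA(1,4) by blast
        have c2: "A1 \<inter> A2 \<in> u" using YA ultra_int[OF u(1)] by blast
        have c3: "a \<inter> b = (Y1 \<inter> Y2) \<inter> t (A1 \<inter> A2)" using YA t_int by auto
        show ?thesis unfolding mem_Collect_eq
          apply (rule exI[of _ "Y1 \<inter> Y2"], rule exI[of _ "A1 \<inter> A2"])
          using c1 c2 c3 by simp
      qed
      ultimately have "\<exists>q. ultra q \<and> ?X \<subseteq> q" by (rule ultra_exists_base)
      then obtain q where q: "ultra q" "?X \<subseteq> q" by blast
      have UK: "UNIV \<in> common K" using common_UNIV[of K] Kult by blast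
      have "common K \<subseteq> q"
      proof
        fix Y assume "Y \<in> common K"
        then have "Y \<inter> t UNIV \<in> ?X" unfolding mem_Collect_eq
          apply (rule_tac x=Y in exI, rule_tac x=UNIV in exI) using ultra_UNIV[OF u(1)] by simp
        then show "Y \<in> q" using q t_UNIV by auto
      qed
      then have qK: "q \<in> K" using Kcl q by blast
      have "u \<subseteq> mul q p"
      proof
        fix A assume "A \<in> u"
        then have "UNIV \<inter> t A \<in> ?X" unfolding mem_Collect_eq
          apply (rule_tac x=UNIV in exI, rule_tac x=A in exI) using UK by simp
        then show "A \<in> mul q p" using q mul_t by auto
      qed
      then have "u = mul q p" using ultra_sub_eq u(1) mul_ultra[OF q(1) pu] by blast
      then show "u \<in> ?Kp" using qK by blast
    qed
  qed
  moreover have "?Kp \<subseteq> K" using Ksemi p by blast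
  ultimately have "?Kp = K" by (rule Kmin)
  then obtain q0 where q0: "q0 \<in> K" "mul q0 p = p" using p by (metis imageE)
  let ?T = "{q \<in> K. mul q p = p}"
  have "?T \<in> ?A"
  proof (intro CollectI conjI)
    show "?T \<subseteq> H" using K by blast
    show "?T \<noteq> {}" using q0 by blast
    show "semi ?T"
      unfolding semi_def
    proof (intro ballI)
      fix a b assume "a \<in> ?T" "b \<in> ?T"
      then show "mul a b \<in> ?T" using Ksemi by (simp add: mul_assoc)
    qed
    show "closedU ?T"
      unfolding closedU_def
    proof (intro allI impI)
      fix u assume u: "ultra u" "common ?T \<subseteq> u"
      have "common K \<subseteq> u" using u common_anti[of ?T K] by blast
      then have uK: "u \<in> K" using Kcl u by blast
      have "p \<subseteq> mul u p"
      proof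
        fix A assume "A \<in> p"
        then have "t A \<in> common ?T" unfolding common_def using mul_t by auto
        then show "A \<in> mul u p" using u mul_t by blast
      qed
      then have "p = mul u p" using ultra_sub_eq pu mul_ultra[OF u(1) pu] by blast
      then show "u \<in> ?T" using uK by simp
    qed
  qed
  moreover have "?T \<subseteq> K" by blast
  ultimately have TK: "?T = K" by (rule Kmin)
  have "p \<in> ?T" using p by (subst TK)
  then have pp: "mul p p = p" by simp
  have "K \<subseteq> H" using K by simp
  then have "p \<in> H" using p by blast
  then show ?thesis using pp by blast
qed



definition V :: "nat set set \<Rightarrow> nat set \<Rightarrow> nat set set" where
  "V S K = {x \<in> S. x \<noteq> {} \<and> x \<inter> K = {}}"

lemma V_nonempty:
  assumes "IP_set S" "finite K" shows "V S K \<noteq> {}"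
proof -
  obtain F where F: "F \<subseteq> S" "infinite F" "\<And>A B. A \<in> F \<Longrightarrow> B \<in> F \<Longrightarrow> A \<noteq> B \<Longrightarrow> A \<inter> B = {}"
  proof -
    from assms(1) have "\<exists>F. F \<subseteq> S \<and> infinite F \<and> (\<forall>A\<in>F. \<forall>B\<in>F. A \<noteq> B \<longrightarrow> A \<inter> B = {})"
      unfolding IP_set_def by (elim conjE)
    then obtain F where "F \<subseteq> S \<and> infinite F \<and> (\<forall>A\<in>F. \<forall>B\<in>F. A \<noteq> B \<longrightarrow> A \<inter> B = {})" by (elim exE)
    then show ?thesis using that by auto
  qed
  let ?Bad = "{A \<in> F. A \<inter> K \<noteq> {}}"
  define f where "f A = (SOME k. k \<in> A \<inter> K)" for A :: "nat set"
  have fin: "f A \<in> A \<inter> K" if "A \<in> ?Bad" for A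
    using that unfolding f_def by (metis (mono_tags, lifting) all_not_in_conv mem_Collect_eq someI)
  have "inj_on f ?Bad"
  proof (rule inj_onI)
    fix A B assume AB: "A \<in> ?Bad" "B \<in> ?Bad" "f A = f B"
    then have "f A \<in> A \<inter> B" using fin[OF AB(1)] fin[OF AB(2)] by auto
    then show "A = B" using F(3) AB by blast
  qed
  moreover have "f ` ?Bad \<subseteq> K" using fin by blast
  ultimately have "finite ?Bad" using inj_on_finite assms(2) by blast
  then have "finite (?Bad \<union> {{}})" by simp
  then have "infinite (F - (?Bad \<union> {{}}))" using F(2) by (meson Diff_infinite_finite)
  then obtain x where "x \<in> F - (?Bad \<union> {{}})" by (meson finite.emptyI rev_finite_subset subsetI)
  then have "x \<in> V S K" using F(1) unfolding V_def by blast
  then show ?thesis by blast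
qed

lemma V_Un: "V S K1 \<inter> V S K2 = V S (K1 \<union> K2)"
  unfolding V_def by auto

lemma exists_idem:
  assumes S: "IP_set S"
  shows "\<exists>p. ultra p \<and> mul p p = p \<and> (\<forall>K. finite K \<longrightarrow> V S K \<in> p)"
proof -
  let ?H = "{p. ultra p \<and> (\<forall>K. finite K \<longrightarrow> V S K \<in> p)}"
  have Sun: "A \<union> B \<in> S" if "A \<in> S" "B \<in> S" for A B using S that unfolding IP_set_def by blast
  have "\<exists>p\<in>?H. mul p p = p"
  proof (rule ellis)
    let ?X = "{V S K | K. finite K}"
    have "{} \<notin> ?X" using V_nonempty[OF S] by auto
    moreover have "A \<inter> B \<in> ?X" if "A \<in> ?X" "B \<in> ?X" for A B
    proof -
      from that obtain K1 K2 where "finite K1" "finite K2" "A = V S K1" "B = V S K2" by blast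
      then show ?thesis using V_Un by blast
    qed
    ultimately have "\<exists>u. ultra u \<and> ?X \<subseteq> u" by (rule ultra_exists_base)
    then show "?H \<noteq> {}" by blast
    show "\<forall>p\<in>?H. ultra p" by blast
    show "closedU ?H"
      unfolding closedU_def
    proof (intro allI impI)
      fix u assume u: "ultra u" "common ?H \<subseteq> u"
      have "V S K \<in> u" if "finite K" for K
      proof -
        have "V S K \<in> common ?H" unfolding common_def using that by blast
        then show ?thesis using u by blast
      qed
      then show "u \<in> ?H" using u by blast
    qed
    show "semi ?H"
      unfolding semi_def
    proof (intro ballI)
      fix p q assume pq: "p \<in> ?H" "q \<in> ?H"
      have pu: "ultra p" and qu: "ultra q" using pq by auto
      have "V S K \<in> mul p q" if K: "finite K" for K
      proof -
        have "V S K \<subseteq> {x. sh (V S K) x \<in> q}"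
        proof
          fix x assume x: "x \<in> V S K"
          have "V S K \<subseteq> sh (V S K) x"
            using x Sun unfolding sh_def V_def by auto
          moreover have "V S K \<in> q" using pq K by blast
          ultimately show "x \<in> {x. sh (V S K) x \<in> q}" using ultra_up[OF qu] by blast
        qed
        moreover have "V S K \<in> p" using pq K by blast
        ultimately show ?thesis unfolding mul_mem using ultra_up[OF pu] by blast
      qed
      then show "mul p q \<in> ?H" using mul_ultra[OF pu qu] by blast
    qed
  qed
  then show ?thesis by blast
qed

definition starclosed :: "nat set set set \<Rightarrow> nat set set \<Rightarrow> bool" where
  "starclosed p C \<longleftrightarrow> C \<in> p \<and> (\<forall>x\<in>C. sh C x \<in> p)"

lemma star_exists:
  assumes p: "ultra p" "mul p p = p" and A: "A \<in> p"
  shows "starclosed p {x \<in> A. sh A x \<in> p}"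
proof -
  let ?A = "{x \<in> A. sh A x \<in> p}"
  have "{x. sh A x \<in> p} \<in> p" using A p(2) mul_mem[of A p p] by simp
  then have "A \<inter> {x. sh A x \<in> p} \<in> p" using ultra_int[OF p(1) A] by blast
  moreover have "A \<inter> {x. sh A x \<in> p} = ?A" by blast
  ultimately have "?A \<in> p" by simp
  moreover have "sh ?A x \<in> p" if x: "x \<in> ?A" for x
  proof -
    have e: "sh ?A x = sh A x \<inter> {y. sh (sh A x) y \<in> p}"
      unfolding sh_sh by (auto simp: sh_def)
    have "sh A x \<in> p" using x by blast
    moreover then have "{y. sh (sh A x) y \<in> p} \<in> p" using p(2) mul_mem[of "sh A x" p p] by simp
    ultimately show ?thesis unfolding e using ultra_int[OF p(1)] by blast
  qed
  ultimately show ?thesis unfolding starclosed_def by blast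
qed

lemma star_step:
  assumes p: "ultra p" and C: "starclosed p C" and x: "x \<in> C"
  shows "starclosed p (C \<inter> sh C x)"
proof -
  have "C \<in> p" "sh C x \<in> p" using C x unfolding starclosed_def by auto
  then have "C \<inter> sh C x \<in> p" using ultra_int[OF p] by blast
  moreover have "sh (C \<inter> sh C x) y \<in> p" if y: "y \<in> C \<inter> sh C x" for y
  proof -
    have e: "sh (C \<inter> sh C x) y = sh C y \<inter> sh C (x \<union> y)"
      by (simp add: sh_int sh_sh)
    have "sh C y \<in> p" using C y unfolding starclosed_def by blast
    moreover have "x \<union> y \<in> C" using y unfolding sh_def by blast
    then have "sh C (x \<union> y) \<in> p" using C unfolding starclosed_def by blast
    ultimately show ?thesis unfolding e using ultra_int[OF p] by blast
  qed
  ultimately show ?thesis unfolding starclosed_def by blast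
qed

definition pick :: "nat set set \<Rightarrow> nat set set \<Rightarrow> nat set \<Rightarrow> nat set" where
  "pick S C K = (SOME x. x \<in> C \<inter> V S K)"

fun stq :: "nat set set \<Rightarrow> nat set set \<Rightarrow> nat \<Rightarrow> nat set set \<times> nat set" where
  "stq S C0 0 = (C0, {})"
| "stq S C0 (Suc n) = (let C = fst (stq S C0 n); K = snd (stq S C0 n); x = pick S C K
     in (C \<inter> sh C x, K \<union> x))"

lemma idem_seq:
  assumes p: "ultra p" "mul p p = p" and A: "A \<in> p" and V: "\<forall>K. finite K \<longrightarrow> V S K \<in> p"
    and Sfin: "\<forall>x\<in>S. finite x"
  shows "\<exists>xs::nat \<Rightarrow> nat set. (\<forall>n. xs n \<in> S \<and> xs n \<noteq> {}) \<and> (\<forall>m n. m \<noteq> n \<longrightarrow> xs m \<inter> xs n = {})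
     \<and> (\<forall>I. finite I \<longrightarrow> I \<noteq> {} \<longrightarrow> \<Union>(xs ` I) \<in> A)"
proof -
  define C0 where "C0 = {x \<in> A. sh A x \<in> p}"
  define C where "C n = fst (stq S C0 n)" for n
  define K where "K n = snd (stq S C0 n)" for n
  define xs where "xs n = pick S (C n) (K n)" for n
  have CS: "C (Suc n) = C n \<inter> sh (C n) (xs n)" for n
    unfolding C_def xs_def K_def by (simp add: Let_def)
  have KS: "K (Suc n) = K n \<union> xs n" for n
    unfolding C_def xs_def K_def by (simp add: Let_def)
  have C0': "C 0 = C0" "K 0 = {}" unfolding C_def K_def by simp_all
  have pickI: "xs n \<in> C n \<inter> V S (K n)" if "starclosed p (C n)" "finite (K n)" for n
  proof -
    have "C n \<inter> V S (K n) \<in> p" using that V ultra_int[OF p(1)] unfolding starclosed_def by blast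
    then have "C n \<inter> V S (K n) \<noteq> {}" using ultra_empty[OF p(1)] by metis
    then show ?thesis unfolding xs_def pick_def by (meson ex_in_conv someI_ex)
  qed
  have inv: "starclosed p (C n) \<and> finite (K n) \<and> K n = \<Union>(xs ` {..<n})" for n
  proof (induction n)
    case 0
    then show ?case using C0' star_exists[OF p A] unfolding C0_def by simp
  next
    case (Suc n)
    have x: "xs n \<in> C n \<inter> V S (K n)" using pickI Suc by blast
    have "starclosed p (C (Suc n))" unfolding CS using star_step[OF p(1)] Suc x by blast
    moreover have "finite (K (Suc n))" unfolding KS using Suc x Sfin unfolding V_def by blast
    moreover have "K (Suc n) = \<Union>(xs ` {..<Suc n})" unfolding KS using Suc by (simp add: lessThan_Suc Un_commute)
    ultimately show ?case by blast
  qed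
  have xsV: "xs n \<in> C n \<inter> V S (K n)" for n using pickI inv by blast
  have Cdec: "C n \<subseteq> C m" if "m \<le> n" for m n
  proof -
    have "C (Suc k) \<subseteq> C k" for k unfolding CS by blast
    then show ?thesis using that by (metis lift_Suc_antimono_le)
  qed
  have C0A: "C 0 \<subseteq> A" unfolding C0' C0_def by blast
  have disj: "xs m \<inter> xs n = {}" if "m < n" for m n
  proof -
    have "xs m \<subseteq> K n" using inv[of n] that by blast
    moreover have "xs n \<inter> K n = {}" using xsV[of n] unfolding V_def by blast
    ultimately show ?thesis by blast
  qed
  have FU: "\<Union>(xs ` I) \<in> C (Min I)" if "finite I" "I \<noteq> {}" for I
    using that
  proof (induction "card I" arbitrary: I rule: less_induct)
    case less
    define m where "m = Min I"
    have mI: "m \<in> I" using less.prems m_def by simp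
    show ?case
    proof (cases "I - {m} = {}")
      case True
      then have "I = {m}" using mI by blast
      then have "\<Union>(xs ` I) = xs m" "Min I = m" by simp_all
      then show ?thesis using xsV[of m] by simp
    next
      case False
      let ?I = "I - {m}"
      have "card ?I < card I" using less.prems mI by (meson card_Diff1_less)
      then have IH: "\<Union>(xs ` ?I) \<in> C (Min ?I)" using less.hyps less.prems False by blast
      have "finite ?I" using less.prems by simp
      then have "Min ?I \<in> ?I" using False by (rule Min_in)
      moreover have "m \<le> Min ?I" using less.prems m_def \<open>Min ?I \<in> ?I\<close> by simp
      ultimately have "Suc m \<le> Min ?I" by (metis DiffE insertCI le_antisym not_less_eq_eq)
      then have "\<Union>(xs ` ?I) \<in> C (Suc m)" using IH Cdec by blast
      then have "xs m \<union> \<Union>(xs ` ?I) \<in> C m" unfolding CS sh_def by blast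
      moreover have "\<Union>(xs ` I) = xs m \<union> \<Union>(xs ` ?I)" using mI by blast
      ultimately show ?thesis using m_def by simp
    qed
  qed
  have r1: "\<forall>n. xs n \<in> S \<and> xs n \<noteq> {}" using xsV unfolding V_def by auto
  have r2: "\<forall>m n. m \<noteq> n \<longrightarrow> xs m \<inter> xs n = {}"
    using disj by (metis Int_commute linorder_neqE_nat)
  have r3: "\<forall>I. finite I \<longrightarrow> I \<noteq> {} \<longrightarrow> \<Union>(xs ` I) \<in> A"
  proof (intro allI impI)
    fix I :: "nat set" assume "finite I" "I \<noteq> {}"
    then have "\<Union>(xs ` I) \<in> C (Min I)" by (rule FU)
    moreover have "C (Min I) \<subseteq> C 0" by (rule Cdec) simp
    ultimately show "\<Union>(xs ` I) \<in> A" using C0A by (meson subsetD)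
  qed
  have "(\<forall>n. xs n \<in> S \<and> xs n \<noteq> {}) \<and> (\<forall>m n. m \<noteq> n \<longrightarrow> xs m \<inter> xs n = {})
     \<and> (\<forall>I. finite I \<longrightarrow> I \<noteq> {} \<longrightarrow> \<Union>(xs ` I) \<in> A)" using r1 r2 r3 by (intro conjI)
  then show ?thesis by blast
qed


theorem lemma2p3:
  fixes S :: "nat set set" and r :: nat and c :: "nat set \<Rightarrow> nat"
  assumes "IP_set S" and "r \<ge> 1"
    and "\<forall>A\<in>S. c A \<in> {1..r}"
  shows "(\<exists>S'. S' \<subseteq> S \<and> IP_set S' \<and> (\<exists>i\<in>{1..r}. \<forall>A\<in>S'. c A \<noteq> i))
       \<or> (\<exists>\<B> \<T>. finite \<B> \<and> \<B> \<subseteq> S \<and> IP_set \<T> \<and> \<T> \<subseteq> set_minus_fam S \<B>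
              \<and> full_matches c \<B> \<T>)"
proof -
  have Sfin: "\<forall>x\<in>S. finite x" using assms(1) unfolding IP_set_def by (elim conjE)
  have Sun: "\<forall>x\<in>S. \<forall>y\<in>S. x \<union> y \<in> S" using assms(1) unfolding IP_set_def by (elim conjE)
  obtain p where p: "ultra p" "mul p p = p" and pV: "\<forall>K. finite K \<longrightarrow> V S K \<in> p"
    using exists_idem[OF assms(1)] by blast
  have "V S {} \<in> p" using pV by blast
  moreover have "V S {} \<subseteq> S" unfolding V_def by blast
  ultimately have "S \<in> p" using ultra_up[OF p(1)] by blast
  moreover have "S = \<Union>((\<lambda>i. S \<inter> {x. c x = i}) ` {1..r})" using assms(3) by blast
  ultimately have "\<Union>((\<lambda>i. S \<inter> {x. c x = i}) ` {1..r}) \<in> p" by simp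
  then obtain i0 where "i0 \<in> {1..r}" and Ap: "S \<inter> {x. c x = i0} \<in> p"
    using ultra_finite_Union[OF p(1), of "{1..r}"] by blast
  define A where "A = S \<inter> {x. c x = i0}"
  obtain xs :: "nat \<Rightarrow> nat set" where xs1: "\<forall>n. xs n \<in> S \<and> xs n \<noteq> {}"
    and xs2: "\<forall>m n. m \<noteq> n \<longrightarrow> xs m \<inter> xs n = {}"
    and xs3: "\<forall>I. finite I \<longrightarrow> I \<noteq> {} \<longrightarrow> \<Union>(xs ` I) \<in> A"
    using idem_seq[OF p Ap pV Sfin] unfolding A_def by blast
  have inA: "\<Union>(xs ` I) \<in> S" "c (\<Union>(xs ` I)) = i0" if "finite I" "I \<noteq> {}" for I
    using xs3 that unfolding A_def by blast+
  define T where "T = {\<Union>(xs ` I) | I. finite I \<and> I \<noteq> {} \<and> 0 \<notin> I}"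
  have TS: "T \<subseteq> S" unfolding T_def using inA by blast
  have "IP_set T"
    unfolding IP_set_def
  proof (intro conjI ballI)
    fix X assume "X \<in> T" then show "finite X" using TS Sfin by blast
  next
    fix X Y assume XY: "X \<in> T" "Y \<in> T"
    then obtain I J where IJ: "finite I" "I \<noteq> {}" "0 \<notin> I" "X = \<Union>(xs ` I)"
      "finite J" "J \<noteq> {}" "0 \<notin> J" "Y = \<Union>(xs ` J)" unfolding T_def by blast
    then have "X \<union> Y = \<Union>(xs ` (I \<union> J))" by auto
    moreover have "finite (I \<union> J)" "I \<union> J \<noteq> {}" "0 \<notin> I \<union> J" using IJ by auto
    ultimately show "X \<union> Y \<in> T" unfolding T_def by blast
  next
    let ?F = "range (\<lambda>n. xs (Suc n))"
    have "?F \<subseteq> T"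
    proof
      fix X assume "X \<in> ?F"
      then obtain n where "X = xs (Suc n)" by blast
      then have "X = \<Union>(xs ` {Suc n})" by simp
      then show "X \<in> T" unfolding T_def by blast
    qed
    moreover have "inj (\<lambda>n. xs (Suc n))"
    proof (rule injI)
      fix m n assume "xs (Suc m) = xs (Suc n)"
      then show "m = n" using xs1 xs2 by (metis Int_absorb Suc_inject)
    qed
    then have "infinite ?F" using finite_imageD[of "\<lambda>n. xs (Suc n)" UNIV] by (metis infinite_UNIV_nat inj_on_subset subset_UNIV)
    moreover have "\<forall>X\<in>?F. \<forall>Y\<in>?F. X \<noteq> Y \<longrightarrow> X \<inter> Y = {}"
    proof (intro ballI impI)
      fix X Y assume "X \<in> ?F" "Y \<in> ?F" "X \<noteq> Y"
      then obtain a b where "X = xs (Suc a)" "Y = xs (Suc b)" "a \<noteq> b" by auto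
      then show "X \<inter> Y = {}" using xs2 by simp
    qed
    ultimately show "\<exists>F. F \<subseteq> T \<and> infinite F \<and> (\<forall>A\<in>F. \<forall>B\<in>F. A \<noteq> B \<longrightarrow> A \<inter> B = {})"
      by blast
  qed
  moreover have "T \<subseteq> set_minus_fam S {xs 0}"
  proof
    fix X assume "X \<in> T"
    then obtain I where I: "finite I" "I \<noteq> {}" "0 \<notin> I" "X = \<Union>(xs ` I)" unfolding T_def by blast
    have "xs i \<inter> xs 0 = {}" if "i \<in> I" for i using I(3) that xs2 by (metis)
    then have "X \<inter> xs 0 = {}" using I(4) by blast
    then show "X \<in> set_minus_fam S {xs 0}" using TS \<open>X \<in> T\<close> unfolding set_minus_fam_def by blast
  qed
  moreover have "full_matches c {xs 0} T"
    unfolding full_matches_def full_matches_set_def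
  proof
    fix X assume "X \<in> T"
    then obtain I where I: "finite I" "I \<noteq> {}" "0 \<notin> I" "X = \<Union>(xs ` I)" unfolding T_def by blast
    have "c (xs 0) = i0" using inA(2)[of "{0}"] by simp
    moreover have "c X = i0" using inA(2)[of I] I by simp
    moreover have "xs 0 \<union> X = \<Union>(xs ` insert 0 I)" using I by simp
    then have "c (xs 0 \<union> X) = i0" using inA(2)[of "insert 0 I"] I by simp
    ultimately show "\<exists>D\<in>{xs 0}. c D = c X \<and> c X = c (D \<union> X)" by simp
  qed
  moreover have "finite {xs 0}" "{xs 0} \<subseteq> S" using xs1 by auto
  ultimately show ?thesis by blast
qed


end
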